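(* Let $i,j,k$ be integers with $j>0$ and $0\le k<i$, and suppose the virtual diagram $(i,j,k)$ has one component. Let $GD((i,j,k))$ be its Gauss diagram. Then $i(c)\neq 0$ for every chord $c$ of $GD((i,j,k))$.
   Context: Braid conventions: braids on $i$ strands are drawn horizontally, oriented left to right, with positions $1,\dots,i$ numbered from top to bottom, and words are read left to right. The generator $\sigma_m$ is a classical (positive) crossing at which the strand in position $m$ moves to position $m+1$, passing over the strand moving from position $m+1$ to position $m$. Virtual crossings carry no over/under information. $VB^1_{i,j}$ is obtained from $(\sigma_1\cdots\sigma_{i-1})^j$ by replacing the crossings of the first (left-most) block $\sigma_1\cdots\sigma_{i-1}$ by virtual crossings. $B_k=\sigma_k\cdots\sigma_1$, with $B_0$ trivial. $(i,j,k)$ is the closure of $VB^1_{i,j}B_k$. Gauss diagram: for an oriented virtual knot diagram, take a circle $\Gamma$ parametrizing the knot. Each classical crossing gives a chord joining its two preimages, with an arrowhead at the under-passage and labelled by the crossing sign; virtual crossings are ignored. A crossing is positive ($+1$) if the understrand passes from the right to the left of the overstrand, and negative ($-1$) otherwise. For a chord $c$, its endpoints split $\Gamma$ into open arcs $\gamma_1,\gamma_2$. Flip every chord $c'\neq c$ with one endpoint on each arc whose arrowhead lies on $\gamma_2$; flipping reverses the arrow and negates the sign. Then $i(c)$ is the sum of signs of all chords with one endpoint on each of $\gamma_1,\gamma_2$. This is well defined up to sign. *)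

theory Defs
  imports Main
begin

(* A braid letter: a classical positive crossing sigma_m or a virtual crossing at
   positions m, m+1 (positions numbered 1..i from top to bottom). *)
datatype letter = Cl nat | Vi nat

fun lpos :: "letter \<Rightarrow> nat" where
  "lpos (Cl m) = m" | "lpos (Vi m) = m"

fun is_Cl :: "letter \<Rightarrow> bool" where
  "is_Cl (Cl m) = True" | "is_Cl (Vi m) = False"

fun crossing_sign :: "letter \<Rightarrow> int" where
  "crossing_sign (Cl m) = 1" | "crossing_sign (Vi m) = 0"

definition step :: "letter \<Rightarrow> nat \<Rightarrow> nat" where
  "step l p = (if p = lpos l then lpos l + 1 else if p = lpos l + 1 then lpos l else p)"

definition braid_perm :: "letter list \<Rightarrow> nat \<Rightarrow> nat" where
  "braid_perm w p = fold step w p"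

definition one_component :: "nat \<Rightarrow> letter list \<Rightarrow> bool" where
  "one_component n w \<longleftrightarrow> (\<forall>p\<in>{1..n}. \<exists>r. (braid_perm w ^^ r) 1 = p)"

(* events met by a strand entering the word at position p; letters indexed from t.
   (t, True) = over-passage of classical crossing t, (t, False) = under-passage *)
fun pass_ev :: "letter list \<Rightarrow> nat \<Rightarrow> nat \<Rightarrow> (nat \<times> bool) list" where
  "pass_ev [] t p = []"
| "pass_ev (l # ls) t p =
     (case l of
        Cl m \<Rightarrow> (if p = m then [(t, True)] else if p = m + 1 then [(t, False)] else [])
      | Vi m \<Rightarrow> []) @ pass_ev ls (Suc t) (step l p)"

(* parametrisation of the closed curve (circle Gamma), starting at position 1 on the left *)
definition traversal :: "nat \<Rightarrow> letter list \<Rightarrow> (nat \<times> bool) list" where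
  "traversal n w = concat (map (\<lambda>r. pass_ev w 0 ((braid_perm w ^^ r) 1)) [0..<n])"

(* chords of the Gauss diagram = classical crossings, indexed by letter position *)
definition gd_chords :: "letter list \<Rightarrow> nat set" where
  "gd_chords w = {t. t < length w \<and> is_Cl (w ! t)}"

(* point on Gamma of the over-passage (arrow tail) and under-passage (arrow head) *)
definition tail_pos :: "nat \<Rightarrow> letter list \<Rightarrow> nat \<Rightarrow> nat" where
  "tail_pos n w t = (THE x. x < length (traversal n w) \<and> traversal n w ! x = (t, True))"

definition head_pos :: "nat \<Rightarrow> letter list \<Rightarrow> nat \<Rightarrow> nat" where
  "head_pos n w t = (THE x. x < length (traversal n w) \<and> traversal n w ! x = (t, False))"

definition arc :: "nat \<Rightarrow> nat \<Rightarrow> nat \<Rightarrow> nat set" where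
  "arc N a b = {x. x < N \<and> (if a < b then a < x \<and> x < b else (a < x \<or> x < b))}"

definition gd_index :: "nat \<Rightarrow> letter list \<Rightarrow> nat \<Rightarrow> int" where
  "gd_index n w c =
    (let N = length (traversal n w);
         g1 = arc N (tail_pos n w c) (head_pos n w c);
         g2 = arc N (head_pos n w c) (tail_pos n w c)
     in \<Sum>c' \<in> {c' \<in> gd_chords w - {c}.
                 (tail_pos n w c' \<in> g1 \<and> head_pos n w c' \<in> g2) \<or>
                 (tail_pos n w c' \<in> g2 \<and> head_pos n w c' \<in> g1)}.
          crossing_sign (w ! c') * (if head_pos n w c' \<in> g2 then -1 else 1))"

definition VB1 :: "nat \<Rightarrow> nat \<Rightarrow> letter list" where
  "VB1 i j = map Vi [1..<i] @ concat (replicate (j - 1) (map Cl [1..<i]))"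

definition Bk :: "nat \<Rightarrow> letter list" where
  "Bk k = map Cl (rev [1..<k+1])"

definition ijk_word :: "nat \<Rightarrow> nat \<Rightarrow> nat \<Rightarrow> letter list" where
  "ijk_word i j k = VB1 i j @ Bk k"

end

theory Submission
  imports Defs
begin


lemma step_invol[simp]: "step l (step l p) = p"
  by (auto simp: step_def)

lemma inj_step: "inj (step l)"
  by (metis injI step_invol)

lemma inj_fold_step: "inj (fold step w)"
proof (induction w)
  case Nil then show ?case by simp
next
  case (Cons l w) then show ?case
    using inj_compose[OF Cons.IH inj_step[of l]] by (simp add: comp_def)
qed

lemma step_range: "1 \<le> lpos l \<Longrightarrow> lpos l < n \<Longrightarrow> p \<in> {1..n} \<Longrightarrow> step l p \<in> {1..n}"
  by (auto simp: step_def)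

lemma fold_step_range:
  "\<forall>l\<in>set w. 1 \<le> lpos l \<and> lpos l < n \<Longrightarrow> p \<in> {1..n} \<Longrightarrow> fold step w p \<in> {1..n}"
proof (induction w arbitrary: p)
  case Nil then show ?case by simp
next
  case (Cons l w)
  have "step l p \<in> {1..n}" using step_range Cons.prems by auto
  then show ?case using Cons.IH Cons.prems by simp
qed

lemma fold_step_surj:
  assumes "\<forall>l\<in>set w. 1 \<le> lpos l \<and> lpos l < n" "q \<in> {1..n}"
  shows "\<exists>p\<in>{1..n}. fold step w p = q"
proof -
  have "fold step w ` {1..n} \<subseteq> {1..n}" using fold_step_range[OF assms(1)] by auto
  moreover have "inj_on (fold step w) {1..n}" using inj_fold_step by (metis inj_on_subset subset_UNIV)
  ultimately have "fold step w ` {1..n} = {1..n}" by (simp add: endo_inj_surj)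
  then show ?thesis using assms(2) by (metis imageE)
qed

lemma pass_mem:
  "(t,b) \<in> set (pass_ev ls t0 p) \<longleftrightarrow> t0 \<le> t \<and> t < t0 + length ls \<and> is_Cl (ls!(t-t0)) \<and>
     fold step (take (t-t0) ls) p = lpos (ls!(t-t0)) + (if b then 0 else 1)"
proof (induction ls arbitrary: t0 p)
  case Nil then show ?case by simp
next
  case (Cons l ls)
  show ?case
  proof (cases "t = t0")
    case True
    have "(t,b) \<notin> set (pass_ev ls (Suc t0) q)" for q using Cons[of "Suc t0"] True by simp
    then show ?thesis using True by (cases l) auto
  next
    case False
    then have "(t,b) \<in> set (pass_ev (l#ls) t0 p) \<longleftrightarrow> (t,b) \<in> set (pass_ev ls (Suc t0) (step l p))"
      by (cases l) auto
    also have "\<dots> \<longleftrightarrow> t0 \<le> t \<and> t < t0 + length (l#ls) \<and> is_Cl ((l#ls)!(t-t0)) \<and>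
     fold step (take (t-t0) (l#ls)) p = lpos ((l#ls)!(t-t0)) + (if b then 0 else 1)"
    proof (cases "t0 < t")
      case True
      then have e: "t - t0 = Suc (t - Suc t0)" by simp
      show ?thesis using Cons[of "Suc t0" "step l p"] True unfolding e by auto
    next
      case False
      then show ?thesis using Cons[of "Suc t0" "step l p"] \<open>t \<noteq> t0\<close> by auto
    qed
    finally show ?thesis .
  qed
qed

lemma pass_distinct: "distinct (pass_ev ls t0 p)"
proof (induction ls arbitrary: t0 p)
  case Nil then show ?case by simp
next
  case (Cons l ls)
  have "(t0,b) \<notin> set (pass_ev ls (Suc t0) q)" for b q using pass_mem by simp
  then show ?case using Cons by (cases l) auto
qed

lemma pass_vi: "pass_ev (map Vi xs @ u) t0 p = pass_ev u (t0 + length xs) (fold step (map Vi xs) p)"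
  by (induction xs arbitrary: t0 p) auto

definition wt :: "nat \<times> bool \<Rightarrow> int" where
  "wt e = (if snd e then -1 else 1)"

lemma wt_simps[simp]: "wt (x,True) = -1" "wt (x,False) = 1"
  by (auto simp: wt_def)

lemma pass_total:
  "\<forall>l\<in>set u. is_Cl l \<Longrightarrow> sum_list (map wt (pass_ev u t0 p)) = int p - int (fold step u p)"
proof (induction u arbitrary: t0 p)
  case Nil then show ?case by simp
next
  case (Cons l u)
  then obtain m where l: "l = Cl m" by (cases l) auto
  show ?case using Cons l by (auto simp: step_def)
qed

lemma pass_prefix:
  "\<forall>l\<in>set u. is_Cl l \<Longrightarrow> y < length (pass_ev u t0 p) \<Longrightarrow> pass_ev u t0 p ! y = (t,b) \<Longrightarrow>
   sum_list (map wt (take y (pass_ev u t0 p))) = int p - (int (lpos (u!(t-t0))) + (if b then 0 else 1))"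
proof (induction u arbitrary: t0 p y)
  case Nil then show ?case by simp
next
  case (Cons l u)
  then obtain m where l: "l = Cl m" by (cases l) auto
  show ?case
  proof (cases "p = m \<or> p = m + 1")
    case True
    show ?thesis
    proof (cases y)
      case 0 then show ?thesis using Cons.prems l True by auto
    next
      case (Suc y')
      let ?L = "pass_ev u (Suc t0) (step l p)"
      have y': "y' < length ?L" "?L ! y' = (t,b)" using Cons.prems l True Suc by auto
      then have "(t,b) \<in> set ?L" by (metis nth_mem)
      then have tt: "Suc t0 \<le> t" using pass_mem by blast
      have IH: "sum_list (map wt (take y' ?L)) = int (step l p) - (int (lpos (u!(t-Suc t0))) + (if b then 0 else 1))"
        using Cons.IH[OF _ y'] Cons.prems by simp
      have e: "(l#u)!(t-t0) = u!(t - Suc t0)" using tt by (simp add: Suc_diff_Suc)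
      show ?thesis using True IH l Suc e by (auto simp: step_def)
    qed
  next
    case False
    let ?L = "pass_ev u (Suc t0) (step l p)"
    have eq: "pass_ev (l#u) t0 p = ?L" using False l by auto
    have st: "step l p = p" using False l by (auto simp: step_def)
    have y': "y < length ?L" "?L ! y = (t,b)" using Cons.prems eq by auto
    then have "(t,b) \<in> set ?L" by (metis nth_mem)
    then have tt: "Suc t0 \<le> t" using pass_mem by blast
    have e: "(l#u)!(t-t0) = u!(t - Suc t0)" using tt by (simp add: Suc_diff_Suc)
    show ?thesis using Cons.IH[OF _ y'] Cons.prems eq st e by simp
  qed
qed

lemma fold_Vi:
  "1 \<le> a \<Longrightarrow> fold step (map Vi [a..<b]) p = (if p = a \<and> a \<le> b then b else if a < p \<and> p \<le> b then p - 1 else p)"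
proof (induction b)
  case 0 then show ?case by simp
next
  case (Suc b)
  show ?case
  proof (cases "a \<le> b")
    case True
    then show ?thesis using Suc by (auto simp: step_def)
  next
    case False
    then show ?thesis using Suc by (auto simp: step_def)
  qed
qed

lemma concat_nth:
  "x < length (concat Ls) \<Longrightarrow> \<exists>r y. r < length Ls \<and> y < length (Ls!r) \<and> concat Ls ! x = Ls!r!y \<and>
     take x (concat Ls) = concat (take r Ls) @ take y (Ls!r)"
proof (induction Ls arbitrary: x)
  case Nil then show ?case by simp
next
  case (Cons L Ls)
  show ?case
  proof (cases "x < length L")
    case True
    then show ?thesis by (intro exI[of _ 0] exI[of _ x]) (auto simp: nth_append)
  next
    case False
    then obtain r y where "r < length Ls \<and> y < length (Ls!r) \<and> concat Ls ! (x - length L) = Ls!r!y \<and>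
     take (x - length L) (concat Ls) = concat (take r Ls) @ take y (Ls!r)"
      using Cons by fastforce
    then show ?thesis using False by (intro exI[of _ "Suc r"] exI[of _ y]) (auto simp: nth_append)
  qed
qed



lemma sum_take_nth: "x \<le> length xs \<Longrightarrow> sum_list (map f (take x xs)) = (\<Sum>z<x. f (xs!z))"
proof (induction xs arbitrary: x)
  case Nil then show ?case by simp
next
  case (Cons a xs)
  then show ?case by (cases x) (simp_all add: sum.lessThan_Suc_shift del: sum.lessThan_Suc)
qed

lemma telescope: "(\<Sum>s<r. (A s::int) - B (Suc s)) = (\<Sum>s<r. A s - B s) + B 0 - B r"
  by (induction r) auto

lemma sum_concat_map: "sum_list (map wt (concat (map L [0..<r]))) = (\<Sum>s<r. sum_list (map wt (L s)))"
  by (induction r) auto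

lemma arc_disj: "a \<noteq> b \<Longrightarrow> arc N a b \<inter> arc N b a = {}"
  by (auto simp: arc_def split: if_splits)

lemma arc_cover: "a \<noteq> b \<Longrightarrow> x < N \<Longrightarrow> x \<noteq> a \<Longrightarrow> x \<noteq> b \<Longrightarrow> x \<in> arc N a b \<or> x \<in> arc N b a"
  by (auto simp: arc_def)

lemma arc_ends: "a \<notin> arc N a b" "b \<notin> arc N a b"
  by (auto simp: arc_def)

lemma concat_distinct:
  assumes "\<And>r r' e. r < length Ls \<Longrightarrow> r' < length Ls \<Longrightarrow> e \<in> set (Ls!r) \<Longrightarrow> e \<in> set (Ls!r') \<Longrightarrow> r = r'"
    and "\<forall>L\<in>set Ls. distinct L"
  shows "distinct (concat Ls)"
  using assms
proof (induction Ls)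
  case Nil then show ?case by simp
next
  case (Cons L Ls)
  have "distinct (concat Ls)"
    using Cons.prems by (intro Cons.IH) (auto, metis Suc_less_eq nth_Cons_Suc old.nat.inject)
  moreover have "set L \<inter> set (concat Ls) = {}"
  proof (rule ccontr)
    assume "set L \<inter> set (concat Ls) \<noteq> {}"
    then obtain e L' where "e \<in> set L" "L' \<in> set Ls" "e \<in> set L'" by auto
    then obtain r' where "r' < length Ls" "Ls ! r' = L'" by (metis in_set_conv_nth)
    then show False using Cons.prems(1)[of 0 "Suc r'" e] \<open>e \<in> set L\<close> \<open>e \<in> set L'\<close> by simp
  qed
  ultimately show ?case using Cons.prems by simp
qed

lemma main_general:
  assumes w: "w = map Vi [1..<n] @ u"
    and u: "\<forall>l\<in>set u. is_Cl l \<and> 1 \<le> lpos l \<and> lpos l < n"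
    and oc: "one_component n w"
    and c: "c \<in> gd_chords w"
  shows "gd_index n w c \<noteq> 0"
proof -
  have rng: "\<forall>l\<in>set w. 1 \<le> lpos l \<and> lpos l < n" using u w by auto
  have c1: "c < length w" "is_Cl (w!c)" using c by (auto simp: gd_chords_def)
  then have "w!c \<in> set w" by simp
  then have n2: "n \<ge> 2" using rng by fastforce
  define f where "f = braid_perm w"
  define P where "P r = (f ^^ r) 1" for r
  define L where "L r = pass_ev w 0 (P r)" for r
  define T where "T = traversal n w"
  define N where "N = length T"
  define \<delta> where "\<delta> = fold step (map Vi [1..<n])"
  define F where "F x = sum_list (map wt (take x T))" for x
  have Teq: "T = concat (map L [0..<n])" by (simp add: T_def traversal_def L_def[abs_def] P_def[abs_def] f_def)
  have f: "f p = fold step u (\<delta> p)" for p by (simp add: f_def braid_perm_def w \<delta>_def)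
  have finj: "inj f" using inj_fold_step[of w] by (simp add: f_def braid_perm_def[abs_def])
  have frng: "p \<in> {1..n} \<Longrightarrow> f p \<in> {1..n}" for p
    using fold_step_range[OF rng] by (simp add: f_def braid_perm_def)
  have Prng: "P r \<in> {1..n}" for r
  proof (induction r)
    case 0 then show ?case using n2 by (simp add: P_def)
  next
    case (Suc r) then show ?case using frng[of "P r"] by (simp add: P_def)
  qed
  have P0: "P 0 = 1" by (simp add: P_def)
  have PSuc: "P (Suc r) = f (P r)" for r by (simp add: P_def)
  have Pdist: "P a \<noteq> P b" if "a < b" "b < n" for a b
  proof
    assume eq: "P a = P b"
    define d where "d = b - a"
    have "(f ^^ a) ((f ^^ d) 1) = (f ^^ a) 1"
    proof -
      have "(f ^^ a) ((f ^^ d) 1) = (f ^^ (a + d)) 1" by (simp add: funpow_add)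
      also have "a + d = b" using that d_def by simp
      finally show ?thesis using eq by (simp add: P_def)
    qed
    then have fd: "(f ^^ d) 1 = 1" using inj_fn[OF finj, of a] by (simp add: inj_eq)
    have "{1..n} \<subseteq> P ` {..<d}"
    proof
      fix p assume "p \<in> {1..n}"
      then obtain r where "(braid_perm w ^^ r) 1 = p" using oc unfolding one_component_def by blast
      then have "P (r mod d) = p" using funpow_mod_eq[OF fd] by (simp add: P_def f_def)
      moreover have "r mod d < d" using that d_def by simp
      ultimately show "p \<in> P ` {..<d}" by blast
    qed
    then have "card {1..n} \<le> card (P ` {..<d})" by (intro card_mono) auto
    also have "\<dots> \<le> d" using card_image_le[of "{..<d}" P] by simp
    finally show False using that d_def by simp
  qed
  have Pinj: "inj_on P {..<n}"
    by (rule inj_onI) (metis Pdist lessThan_iff nat_neq_iff)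
  have Pimg: "P ` {..<n} = {1..n}"
    by (rule card_subset_eq) (use Prng in \<open>auto simp: card_image[OF Pinj]\<close>)
  have Pn: "P n = 1"
  proof -
    obtain a where a: "a < n" "P n = P a" using Prng[of n] Pimg by (metis imageE lessThan_iff)
    show ?thesis
    proof (cases a)
      case 0 then show ?thesis using a P0 by simp
    next
      case (Suc a')
      have nn: "n = Suc (n - 1)" using n2 by simp
      have "f (P (n - 1)) = f (P a')" using a Suc PSuc nn by metis
      then have "P (n - 1) = P a'" using finj by (simp add: inj_eq)
      moreover have "a' < n - 1" using a Suc by simp
      ultimately show ?thesis using Pdist[of a' "n-1"] by simp
    qed
  qed

  have d1: "\<delta> 1 = n" using fold_Vi[of 1 n 1] n2 by (simp add: \<delta>_def)
  have dp: "\<delta> p = p - 1" if "2 \<le> p" "p \<le> n" for p using fold_Vi[of 1 n p] that by (simp add: \<delta>_def)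
  have Lu: "L r = pass_ev u (n - 1) (\<delta> (P r))" for r
    using pass_vi[of "[1..<n]" u 0 "P r"] by (simp add: L_def w \<delta>_def)
  have ucl: "\<forall>l\<in>set u. is_Cl l" using u by auto
  have Lsum: "sum_list (map wt (L r)) = int (\<delta> (P r)) - int (P (Suc r))" for r
    using pass_total[OF ucl, of "n-1" "\<delta> (P r)"] by (simp add: Lu PSuc f)
  have Dsum: "(\<Sum>s<Suc r. int (\<delta> (P s)) - int (P s)) = int n - 1 - int r" if "r < n" for r
    using that
  proof (induction r)
    case 0 then show ?case using d1 P0 by simp
  next
    case (Suc r)
    have "P (Suc r) \<noteq> 1" using Pdist[of 0 "Suc r"] Suc.prems P0 by simp
    then have "\<delta> (P (Suc r)) = P (Suc r) - 1" "P (Suc r) \<ge> 2" using dp Prng[of "Suc r"] by auto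
    then show ?case using Suc by simp
  qed
  have w_u: "w ! t = u ! (t - (n-1))" if "t \<ge> n - 1" for t using that w by (simp add: nth_append)
  have Fpass: "\<exists>r y. r < n \<and> y < length (L r) \<and> T!x = L r ! y \<and>
     F x = int n - int r - (int (lpos (w ! fst (T!x))) + (if snd (T!x) then 0 else 1))" if xN: "x < N" for x
  proof -
    obtain r y where ry: "r < length (map L [0..<n])" "y < length (map L [0..<n] ! r)"
      "T ! x = map L [0..<n] ! r ! y"
      "take x T = concat (take r (map L [0..<n])) @ take y (map L [0..<n] ! r)"
    proof -
      have "x < length (concat (map L [0..<n]))" using xN by (simp add: N_def Teq[symmetric])
      from concat_nth[OF this] show ?thesis using that Teq by (metis (no_types, lifting))
    qed
    have r: "r < n" using ry by simp
    have Lr: "map L [0..<n] ! r = L r" using r by simp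
    have tk: "take r (map L [0..<n]) = map L [0..<r]" using r by (simp add: take_map)
    obtain t b where tb: "T!x = (t,b)" by fastforce
    have Lry: "L r ! y = (t,b)" using ry tb Lr by simp
    have yl: "y < length (L r)" using ry Lr by simp
    have prefix: "sum_list (map wt (take y (L r))) = int (\<delta> (P r)) - (int (lpos (u!(t-(n-1)))) + (if b then 0 else 1))"
      using pass_prefix[OF ucl, of y "n-1" "\<delta> (P r)" t b] yl Lry Lu by simp
    have "(t,b) \<in> set (L r)" using Lry yl by (metis nth_mem)
    then have "n - 1 \<le> t" using pass_mem[of t b u "n-1" "\<delta> (P r)"] by (simp add: Lu)
    then have wtu: "w ! t = u!(t-(n-1))" using w_u by simp
    have "F x = (\<Sum>s<r. sum_list(map wt (L s))) + sum_list (map wt (take y (L r)))"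
      by (simp add: F_def ry(4) Lr tk sum_concat_map)
    also have "(\<Sum>s<r. sum_list(map wt (L s))) = (\<Sum>s<r. int(\<delta> (P s)) - int (P (Suc s)))" using Lsum by simp
    also have "\<dots> = (\<Sum>s<r. int(\<delta>(P s)) - int(P s)) + int (P 0) - int (P r)" by (rule telescope)
    finally have "F x = (\<Sum>s<Suc r. int(\<delta>(P s)) - int(P s)) + 1 - (int (lpos (u!(t-(n-1)))) + (if b then 0 else 1))"
      using prefix P0 by simp
    then have "F x = int n - int r - (int (lpos (w ! t)) + (if b then 0 else 1))"
      using Dsum[OF r] wtu by simp
    then show ?thesis using r yl Lry tb by (intro exI[of _ r] exI[of _ y]) simp
  qed
  have FN: "F N = 0"
  proof -
    have "F N = sum_list (map wt T)" by (simp add: F_def N_def)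
    also have "\<dots> = (\<Sum>s<n. sum_list (map wt (L s)))" by (simp add: Teq sum_concat_map)
    also have "\<dots> = (\<Sum>s<n. int(\<delta> (P s)) - int (P (Suc s)))" using Lsum by simp
    also have "\<dots> = (\<Sum>s<n. int(\<delta>(P s)) - int(P s)) + int (P 0) - int (P n)" by (rule telescope)
    also have "\<dots> = 0" using Dsum[of "n-1"] n2 P0 Pn by simp
    finally show ?thesis .
  qed
  have chord_iff: "c' \<in> gd_chords w \<longleftrightarrow> c' < length w \<and> is_Cl (w!c')" for c'
    by (simp add: gd_chords_def)
  have Lmem: "(t,b) \<in> set (L r) \<longleftrightarrow> t < length w \<and> is_Cl (w!t) \<and> fold step (take t w) (P r) = lpos (w!t) + (if b then 0 else 1)" for t b r
    by (simp add: L_def pass_mem)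
  have Tmem: "(t,b) \<in> set T \<longleftrightarrow> (\<exists>r<n. (t,b) \<in> set (L r))" for t b by (auto simp: Teq)
  have ev_exists: "\<exists>x<N. T!x = (c',b)" if "c' \<in> gd_chords w" for c' b
  proof -
    have c': "c' < length w" "is_Cl (w!c')" using that chord_iff by auto
    then have "w!c' \<in> set w" by simp
    then have q: "lpos (w!c') + (if b then 0 else 1) \<in> {1..n}" using rng by fastforce
    have "\<forall>l\<in>set (take c' w). 1 \<le> lpos l \<and> lpos l < n" using rng by (meson in_set_takeD)
    then obtain p where p: "p \<in> {1..n}" "fold step (take c' w) p = lpos (w!c') + (if b then 0 else 1)"
      using fold_step_surj q by blast
    then obtain r where "r < n" "P r = p" using Pimg by (metis imageE lessThan_iff)
    then have "(c',b) \<in> set (L r)" using Lmem c' p by simp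
    then have "(c',b) \<in> set T" using Tmem \<open>r < n\<close> by blast
    then show ?thesis by (simp add: N_def in_set_conv_nth)
  qed
  have Tdist: "distinct T"
    unfolding Teq
  proof (rule concat_distinct)
    fix r r' e assume a: "r < length (map L [0..<n])" "r' < length (map L [0..<n])"
      "e \<in> set (map L [0..<n] ! r)" "e \<in> set (map L [0..<n] ! r')"
    obtain t b where e: "e = (t,b)" by fastforce
    have "fold step (take t w) (P r) = fold step (take t w) (P r')" using a e Lmem by auto
    then have "P r = P r'" using inj_fold_step by (metis injD)
    then show "r = r'" using Pinj a by (auto dest: inj_onD)
  next
    show "\<forall>L\<in>set (map L [0..<n]). distinct L" by (auto simp: L_def pass_distinct)
  qed
  have ev_unique: "x = x'" if "x < N" "x' < N" "T!x = T!x'" for x x'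
    using that Tdist by (simp add: N_def nth_eq_iff_index_eq)
  have tailp: "tail_pos n w c' < N \<and> T ! tail_pos n w c' = (c',True)" if "c' \<in> gd_chords w" for c'
  proof -
    have "tail_pos n w c' = (THE x. x < N \<and> T!x = (c',True))" by (simp add: tail_pos_def T_def N_def)
    moreover have "\<exists>!x. x < N \<and> T!x = (c',True)"
    proof (rule ex_ex1I)
      show "\<exists>x. x < N \<and> T!x = (c',True)" using ev_exists[OF that, of True] by blast
    next
      fix x y assume "x < N \<and> T!x = (c',True)" "y < N \<and> T!y = (c',True)"
      then show "x = y" using ev_unique[of x y] by simp
    qed
    ultimately show ?thesis using theI'[of "\<lambda>x. x < N \<and> T!x = (c',True)"] by simp
  qed
  have headp: "head_pos n w c' < N \<and> T ! head_pos n w c' = (c',False)" if "c' \<in> gd_chords w" for c'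
  proof -
    have "head_pos n w c' = (THE x. x < N \<and> T!x = (c',False))" by (simp add: head_pos_def T_def N_def)
    moreover have "\<exists>!x. x < N \<and> T!x = (c',False)"
    proof (rule ex_ex1I)
      show "\<exists>x. x < N \<and> T!x = (c',False)" using ev_exists[OF that, of False] by blast
    next
      fix x y assume "x < N \<and> T!x = (c',False)" "y < N \<and> T!y = (c',False)"
      then show "x = y" using ev_unique[of x y] by simp
    qed
    ultimately show ?thesis using theI'[of "\<lambda>x. x < N \<and> T!x = (c',False)"] by simp
  qed
  have Tchord: "fst (T!x) \<in> gd_chords w" if "x < N" for x
  proof -
    obtain t b where tb: "T!x = (t,b)" by fastforce
    then have "(t,b) \<in> set T" using that by (metis N_def nth_mem)
    then show ?thesis using Tmem Lmem chord_iff tb by auto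
  qed

  define tc where "tc = tail_pos n w c"
  define hc where "hc = head_pos n w c"
  define C where "C = gd_chords w"
  have finC: "finite C" by (simp add: C_def gd_chords_def)
  have cC: "c \<in> C" using c C_def by simp
  have tc: "tc < N" "T!tc = (c,True)" using tailp[OF c] tc_def by auto
  have hc: "hc < N" "T!hc = (c,False)" using headp[OF c] hc_def by auto
  have tch: "tc \<noteq> hc" using tc hc by auto
  define g1 where "g1 = arc N tc hc"
  define g2 where "g2 = arc N hc tc"
  have cov: "x \<in> g1 \<or> x \<in> g2" if "x < N" "x \<noteq> tc" "x \<noteq> hc" for x
    using arc_cover[OF tch that] g1_def g2_def by simp
  have dis: "x \<notin> g1 \<or> x \<notin> g2" for x using arc_disj[OF tch] g1_def g2_def by blast
  have ends: "tc \<notin> g1" "hc \<notin> g1" using arc_ends g1_def by auto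
  have fing1: "finite g1" by (simp add: g1_def arc_def)
  define S where "S = {c' \<in> C - {c}. (tail_pos n w c' \<in> g1 \<and> head_pos n w c' \<in> g2) \<or>
                 (tail_pos n w c' \<in> g2 \<and> head_pos n w c' \<in> g1)}"
  have gd: "gd_index n w c = (\<Sum>c'\<in>S. crossing_sign (w!c') * (if head_pos n w c' \<in> g2 then -1 else 1))"
    unfolding gd_index_def Let_def S_def g1_def g2_def C_def N_def T_def tc_def hc_def by simp
  define h where "h c' = (of_bool (head_pos n w c' \<in> g1) - of_bool (tail_pos n w c' \<in> g1) :: int)" for c'
  have other: "(tail_pos n w c' \<in> g1 \<or> tail_pos n w c' \<in> g2) \<and> (head_pos n w c' \<in> g1 \<or> head_pos n w c' \<in> g2)"
    if "c' \<in> C" "c' \<noteq> c" for c'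
  proof -
    have t': "tail_pos n w c' < N" "T!tail_pos n w c' = (c',True)" using tailp that C_def by auto
    have h': "head_pos n w c' < N" "T!head_pos n w c' = (c',False)" using headp that C_def by auto
    have "tail_pos n w c' \<noteq> tc" "tail_pos n w c' \<noteq> hc" "head_pos n w c' \<noteq> tc" "head_pos n w c' \<noteq> hc"
      using t' h' tc hc that by auto
    then show ?thesis using cov t' h' by blast
  qed
  have sgn: "crossing_sign (w!c') = 1" if "c' \<in> C" for c'
    using that by (cases "w!c'") (auto simp: C_def chord_iff)
  have A: "(\<Sum>c'\<in>S. crossing_sign (w!c') * (if head_pos n w c' \<in> g2 then -1 else 1)) = (\<Sum>c'\<in>C-{c}. h c')"
  proof (rule sum.mono_neutral_cong_left)
    show "finite (C - {c})" using finC by simp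
    show "S \<subseteq> C - {c}" by (auto simp: S_def)
    show "\<forall>i\<in>C - {c} - S. h i = 0"
    proof
      fix i assume i: "i \<in> C - {c} - S"
      then show "h i = 0" using other[of i] dis[of "tail_pos n w i"] dis[of "head_pos n w i"]
        by (auto simp: S_def h_def)
    qed
    fix x assume x: "x \<in> S"
    then show "crossing_sign (w!x) * (if head_pos n w x \<in> g2 then -1 else 1) = h x"
      using sgn[of x] dis[of "tail_pos n w x"] dis[of "head_pos n w x"]
      by (auto simp: S_def h_def)
  qed
  have B: "(\<Sum>c'\<in>C-{c}. h c') = (\<Sum>c'\<in>C. h c')"
    using sum.remove[OF finC cC, of h] ends by (simp add: h_def tc_def hc_def)
  have Cc: "(\<Sum>c'\<in>C. h c') = int (card (C \<inter> {c'. head_pos n w c' \<in> g1})) - int (card (C \<inter> {c'. tail_pos n w c' \<in> g1}))"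
    by (simp add: h_def sum_subtractf finC)
  have D1: "card (C \<inter> {c'. head_pos n w c' \<in> g1}) = card (g1 \<inter> {x. \<not> snd (T!x)})"
  proof -
    have img: "head_pos n w ` (C \<inter> {c'. head_pos n w c' \<in> g1}) = g1 \<inter> {x. \<not> snd (T!x)}"
    proof
      show "head_pos n w ` (C \<inter> {c'. head_pos n w c' \<in> g1}) \<subseteq> g1 \<inter> {x. \<not> snd (T!x)}"
      proof
        fix x assume "x \<in> head_pos n w ` (C \<inter> {c'. head_pos n w c' \<in> g1})"
        then obtain c' where "c' \<in> C" "head_pos n w c' \<in> g1" "x = head_pos n w c'" by blast
        then show "x \<in> g1 \<inter> {x. \<not> snd (T!x)}" using headp[of c'] C_def by simp
      qed
      show "g1 \<inter> {x. \<not> snd (T!x)} \<subseteq> head_pos n w ` (C \<inter> {c'. head_pos n w c' \<in> g1})"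
      proof
        fix x assume x: "x \<in> g1 \<inter> {x. \<not> snd (T!x)}"
        then have xN: "x < N" by (simp add: g1_def arc_def)
        define t where "t = fst (T!x)"
        have tC: "t \<in> C" using Tchord[OF xN] t_def C_def by simp
        have Tx: "T!x = (t,False)" using x t_def by (cases "T!x") auto
        have hp: "head_pos n w t < N" "T!(head_pos n w t) = (t,False)" using headp[of t] tC C_def by auto
        have "head_pos n w t = x" using ev_unique[of "head_pos n w t" x] hp Tx xN by simp
        then show "x \<in> head_pos n w ` (C \<inter> {c'. head_pos n w c' \<in> g1})" using tC x by auto
      qed
    qed
    have inj: "inj_on (head_pos n w) C"
    proof (rule inj_onI)
      fix a b assume "a \<in> C" "b \<in> C" "head_pos n w a = head_pos n w b"
      then have "T!(head_pos n w a) = (a,False)" "T!(head_pos n w b) = (b,False)" using headp[of a] headp[of b] unfolding C_def by blast+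
      then show "a = b" using \<open>head_pos n w a = head_pos n w b\<close> by (metis prod.inject)
    qed
    have inj2: "inj_on (head_pos n w) (C \<inter> {c'. head_pos n w c' \<in> g1})" by (rule inj_on_subset[OF inj]) auto
    show ?thesis using card_image[OF inj2] img by simp
  qed
  have D2: "card (C \<inter> {c'. tail_pos n w c' \<in> g1}) = card (g1 \<inter> {x. snd (T!x)})"
  proof -
    have img: "tail_pos n w ` (C \<inter> {c'. tail_pos n w c' \<in> g1}) = g1 \<inter> {x. snd (T!x)}"
    proof
      show "tail_pos n w ` (C \<inter> {c'. tail_pos n w c' \<in> g1}) \<subseteq> g1 \<inter> {x. snd (T!x)}"
      proof
        fix x assume "x \<in> tail_pos n w ` (C \<inter> {c'. tail_pos n w c' \<in> g1})"
        then obtain c' where "c' \<in> C" "tail_pos n w c' \<in> g1" "x = tail_pos n w c'" by blast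
        then show "x \<in> g1 \<inter> {x. snd (T!x)}" using tailp[of c'] C_def by simp
      qed
      show "g1 \<inter> {x. snd (T!x)} \<subseteq> tail_pos n w ` (C \<inter> {c'. tail_pos n w c' \<in> g1})"
      proof
        fix x assume x: "x \<in> g1 \<inter> {x. snd (T!x)}"
        then have xN: "x < N" by (simp add: g1_def arc_def)
        define t where "t = fst (T!x)"
        have tC: "t \<in> C" using Tchord[OF xN] t_def C_def by simp
        have Tx: "T!x = (t,True)" using x t_def by (cases "T!x") auto
        have hp: "tail_pos n w t < N" "T!(tail_pos n w t) = (t,True)" using tailp[of t] tC C_def by auto
        have "tail_pos n w t = x" using ev_unique[of "tail_pos n w t" x] hp Tx xN by simp
        then show "x \<in> tail_pos n w ` (C \<inter> {c'. tail_pos n w c' \<in> g1})" using tC x by auto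
      qed
    qed
    have inj: "inj_on (tail_pos n w) C"
    proof (rule inj_onI)
      fix a b assume "a \<in> C" "b \<in> C" "tail_pos n w a = tail_pos n w b"
      then have "T!(tail_pos n w a) = (a,True)" "T!(tail_pos n w b) = (b,True)" using tailp[of a] tailp[of b] unfolding C_def by blast+
      then show "a = b" using \<open>tail_pos n w a = tail_pos n w b\<close> by (metis prod.inject)
    qed
    have inj2: "inj_on (tail_pos n w) (C \<inter> {c'. tail_pos n w c' \<in> g1})" by (rule inj_on_subset[OF inj]) auto
    show ?thesis using card_image[OF inj2] img by simp
  qed
  have E: "(\<Sum>x\<in>g1. wt (T!x)) = int (card (g1 \<inter> {x. \<not> snd (T!x)})) - int (card (g1 \<inter> {x. snd (T!x)}))"
  proof -
    have "(\<Sum>x\<in>g1. wt (T!x)) = (\<Sum>x\<in>g1. of_bool (\<not> snd (T!x)) - of_bool (snd (T!x)))"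
      by (rule sum.cong) (auto simp: wt_def)
    then show ?thesis by (simp add: sum_subtractf fing1)
  qed
  have Fsum: "F x = (\<Sum>z<x. wt (T!z))" if "x \<le> N" for x
    using sum_take_nth[of x T wt] that by (simp add: F_def N_def)
  have G: "(\<Sum>x\<in>g1. wt (T!x)) = F hc - F tc + 1"
  proof -
    have s2: "(\<Sum>z\<in>{0..<Suc tc}. wt (T!z)) = F tc - 1"
      using Fsum[of tc] tc by (simp add: lessThan_atLeast0)
    show ?thesis
    proof (cases "tc < hc")
      case True
      have g: "g1 = {Suc tc..<hc}" using True hc by (auto simp: g1_def arc_def)
      have s1: "(\<Sum>z\<in>{0..<Suc tc}. wt (T!z)) + (\<Sum>z\<in>{Suc tc..<hc}. wt (T!z)) = (\<Sum>z\<in>{0..<hc}. wt (T!z))"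
        by (rule sum.atLeastLessThan_concat) (use True in auto)
      have "F hc = (\<Sum>z\<in>{0..<hc}. wt (T!z))" using Fsum[of hc] hc by (simp add: lessThan_atLeast0)
      then show ?thesis unfolding g using s1 s2 by linarith
    next
      case False
      then have lt: "hc < tc" using tch by simp
      have g: "g1 = {Suc tc..<N} \<union> {0..<hc}" using lt tc by (auto simp: g1_def arc_def)
      have "(\<Sum>x\<in>g1. wt (T!x)) = (\<Sum>z\<in>{Suc tc..<N}. wt (T!z)) + (\<Sum>z\<in>{0..<hc}. wt (T!z))"
        unfolding g using lt by (intro sum.union_disjoint) auto
      moreover have "(\<Sum>z\<in>{0..<Suc tc}. wt (T!z)) + (\<Sum>z\<in>{Suc tc..<N}. wt (T!z)) = (\<Sum>z\<in>{0..<N}. wt (T!z))"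
        by (rule sum.atLeastLessThan_concat) (use tc in auto)
      moreover have "F N = (\<Sum>z\<in>{0..<N}. wt (T!z))" using Fsum[of N] by (simp add: lessThan_atLeast0)
      moreover have "F hc = (\<Sum>z\<in>{0..<hc}. wt (T!z))" using Fsum[of hc] hc by (simp add: lessThan_atLeast0)
      ultimately show ?thesis using FN s2 by linarith
    qed
  qed
  obtain a ya where a: "a < n" "ya < length (L a)" "T!tc = L a ! ya"
    "F tc = int n - int a - (int (lpos (w ! c)) + 0)"
    using Fpass[OF tc(1)] tc(2) by auto
  obtain b yb where b: "b < n" "yb < length (L b)" "T!hc = L b ! yb"
    "F hc = int n - int b - (int (lpos (w ! c)) + 1)"
    using Fpass[OF hc(1)] hc(2) by auto
  have ab: "a \<noteq> b"
  proof
    assume "a = b"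
    have "(c,True) \<in> set (L a)" using a tc by (metis nth_mem)
    moreover have "(c,False) \<in> set (L a)" using b hc \<open>a = b\<close> by (metis nth_mem)
    ultimately show False using Lmem by auto
  qed
  have "gd_index n w c = int a - int b"
    using gd A B Cc D1 D2 E G a b by simp
  then show ?thesis using ab by simp
qed

theorem lemma4p5:
  fixes i j k :: nat
  assumes "j > 0" and "k < i"
    and "one_component i (ijk_word i j k)"
  shows "\<forall>c \<in> gd_chords (ijk_word i j k). gd_index i (ijk_word i j k) c \<noteq> 0"
proof
  fix c assume c: "c \<in> gd_chords (ijk_word i j k)"
  define u where "u = concat (replicate (j - 1) (map Cl [1..<i])) @ map Cl (rev [1..<k+1])"
  have w: "ijk_word i j k = map Vi [1..<i] @ u" by (simp add: u_def ijk_word_def VB1_def Bk_def)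
  have u: "\<forall>l\<in>set u. is_Cl l \<and> 1 \<le> lpos l \<and> lpos l < i" using assms(2) by (auto simp: u_def)
  show "gd_index i (ijk_word i j k) c \<noteq> 0" by (rule main_general[OF w u assms(3) c])
qed

end
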